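(* A finite simple graph $G$ belongs to $\mathcal{G}_2$ if and only if $G$ has a family of cliques covering every edge of $G$ such that every clique in the family contains a simplicial vertex of $G$.
   Context: A finite topology $\tau$ on a finite set $X$ is a family of subsets of $X$ (the open sets) containing $\emptyset$ and $X$ and closed under unions and intersections. Distinct $x,y\in X$ are $T_2$-separated if there exist disjoint open sets $U_x\ni x$ and $U_y\ni y$. $G_2(\tau)$ is the simple graph with vertex set $X$ in which distinct $x,y$ are adjacent iff they are not $T_2$-separated; $\mathcal{G}_2$ is the class of graphs isomorphic to $G_2(\tau)$ for some finite topology $\tau$. A vertex $v$ of $G$ is simplicial if its closed neighborhood $N[v]$ induces a clique. *)

theory Defs
  imports Main
begin

definition finite_topology :: "'b set \<Rightarrow> 'b set set \<Rightarrow> bool" where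
  "finite_topology X T \<longleftrightarrow> finite X \<and> T \<subseteq> Pow X \<and> {} \<in> T \<and> X \<in> T \<and>
     (\<forall>U\<in>T. \<forall>W\<in>T. U \<union> W \<in> T \<and> U \<inter> W \<in> T)"

definition T2_separated :: "'b set set \<Rightarrow> 'b \<Rightarrow> 'b \<Rightarrow> bool" where
  "T2_separated T x y \<longleftrightarrow> (\<exists>U\<in>T. \<exists>W\<in>T. x \<in> U \<and> y \<in> W \<and> U \<inter> W = {})"

definition G2_adj :: "'b set set \<Rightarrow> 'b \<Rightarrow> 'b \<Rightarrow> bool" where
  "G2_adj T x y \<longleftrightarrow> x \<noteq> y \<and> \<not> T2_separated T x y"

definition simple_graph :: "'a set \<Rightarrow> ('a \<Rightarrow> 'a \<Rightarrow> bool) \<Rightarrow> bool" where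
  "simple_graph V E \<longleftrightarrow> finite V \<and> (\<forall>x y. E x y \<longrightarrow> x \<in> V \<and> y \<in> V) \<and>
     (\<forall>x y. E x y \<longrightarrow> E y x) \<and> (\<forall>x. \<not> E x x)"

definition graph_iso :: "'a set \<Rightarrow> ('a \<Rightarrow> 'a \<Rightarrow> bool) \<Rightarrow> 'b set \<Rightarrow> ('b \<Rightarrow> 'b \<Rightarrow> bool) \<Rightarrow> ('a \<Rightarrow> 'b) \<Rightarrow> bool" where
  "graph_iso V E W F f \<longleftrightarrow> bij_betw f V W \<and> (\<forall>x\<in>V. \<forall>y\<in>V. E x y \<longleftrightarrow> F (f x) (f y))"

text \<open>Every finite set is in bijection with a finite set of naturals,
  so taking X :: nat set loses no generality.\<close>
definition in_G2 :: "'a set \<Rightarrow> ('a \<Rightarrow> 'a \<Rightarrow> bool) \<Rightarrow> bool" where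
  "in_G2 V E \<longleftrightarrow> (\<exists>(X::nat set) T f. finite_topology X T \<and> graph_iso V E X (G2_adj T) f)"

definition clique :: "'a set \<Rightarrow> ('a \<Rightarrow> 'a \<Rightarrow> bool) \<Rightarrow> 'a set \<Rightarrow> bool" where
  "clique V E K \<longleftrightarrow> K \<subseteq> V \<and> (\<forall>x\<in>K. \<forall>y\<in>K. x \<noteq> y \<longrightarrow> E x y)"

definition closed_nbhd :: "'a set \<Rightarrow> ('a \<Rightarrow> 'a \<Rightarrow> bool) \<Rightarrow> 'a \<Rightarrow> 'a set" where
  "closed_nbhd V E v = insert v {u \<in> V. E v u}"

definition simplicial :: "'a set \<Rightarrow> ('a \<Rightarrow> 'a \<Rightarrow> bool) \<Rightarrow> 'a \<Rightarrow> bool" where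
  "simplicial V E v \<longleftrightarrow> v \<in> V \<and> clique V E (closed_nbhd V E v)"

end

theory Submission
  imports Defs
begin

lemma inter_closed:
  assumes "finite F" "F \<noteq> {}" "F \<subseteq> T" "\<forall>U\<in>T. \<forall>W\<in>T. U \<inter> W \<in> T"
  shows "\<Inter>F \<in> T"
  using assms
proof (induction F rule: finite_ne_induct)
  case (singleton x)
  then show ?case by simp
next
  case (insert x F)
  then show ?case by simp
qed

definition mo :: "'b set set \<Rightarrow> 'b \<Rightarrow> 'b set" where
  "mo T a = \<Inter>{U\<in>T. a \<in> U}"

lemma mo_props:
  assumes "finite_topology X T" "a \<in> X"
  shows "mo T a \<in> T" "a \<in> mo T a" "\<And>U. U \<in> T \<Longrightarrow> a \<in> U \<Longrightarrow> mo T a \<subseteq> U" "mo T a \<subseteq> X"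
proof -
  have fin: "finite T" using assms(1) unfolding finite_topology_def
    by (meson finite_Pow_iff rev_finite_subset)
  have XT: "X \<in> T" using assms(1) unfolding finite_topology_def by auto
  show "mo T a \<in> T" unfolding mo_def
    apply (rule inter_closed)
    using fin XT assms unfolding finite_topology_def by auto
  show "a \<in> mo T a" unfolding mo_def by auto
  show "\<And>U. U \<in> T \<Longrightarrow> a \<in> U \<Longrightarrow> mo T a \<subseteq> U" unfolding mo_def by auto
  show "mo T a \<subseteq> X" unfolding mo_def using XT assms(2) by auto
qed

lemma sep_iff:
  assumes "finite_topology X T" "a \<in> X" "b \<in> X"
  shows "T2_separated T a b \<longleftrightarrow> mo T a \<inter> mo T b = {}"
proof
  assume "T2_separated T a b"
  then obtain U W where "U \<in> T" "W \<in> T" "a \<in> U" "b \<in> W" "U \<inter> W = {}"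
    unfolding T2_separated_def by blast
  then show "mo T a \<inter> mo T b = {}" using mo_props(3)[OF assms(1,2)] mo_props(3)[OF assms(1,3)]
    by blast
next
  assume "mo T a \<inter> mo T b = {}"
  then show "T2_separated T a b" unfolding T2_separated_def
    using mo_props(1,2)[OF assms(1,2)] mo_props(1,2)[OF assms(1,3)] by blast
qed

lemma forward:
  assumes G: "simple_graph V E" and top: "finite_topology X T"
    and iso: "graph_iso V E X (G2_adj T) f" and exy: "E x y"
  shows "\<exists>w. simplicial V E w \<and> x \<in> closed_nbhd V E w \<and> y \<in> closed_nbhd V E w"
proof -
  let ?M = "\<lambda>a. mo T a"
  have bij: "bij_betw f V X" using iso unfolding graph_iso_def by auto
  have inj: "inj_on f V" and XV: "X = f ` V" using bij by (auto simp: bij_betw_def)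
  have sym: "\<And>a b. E a b \<Longrightarrow> E b a" and inV: "\<And>a b. E a b \<Longrightarrow> a \<in> V \<and> b \<in> V"
    using G unfolding simple_graph_def by auto
  have adj: "E a b \<longleftrightarrow> a \<noteq> b \<and> ?M (f a) \<inter> ?M (f b) \<noteq> {}" if "a \<in> V" "b \<in> V" for a b
  proof -
    have "E a b \<longleftrightarrow> G2_adj T (f a) (f b)" using iso that unfolding graph_iso_def by auto
    also have "\<dots> \<longleftrightarrow> f a \<noteq> f b \<and> ?M (f a) \<inter> ?M (f b) \<noteq> {}"
      unfolding G2_adj_def using sep_iff[OF top] that XV by auto
    also have "f a \<noteq> f b \<longleftrightarrow> a \<noteq> b" using inj that by (meson inj_on_contraD)
    finally show ?thesis .
  qed
  have fX: "\<And>a. a \<in> V \<Longrightarrow> f a \<in> X" using XV by auto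
  note P1 = mo_props(1)[OF top fX] and P2 = mo_props(2)[OF top fX]
    and P3 = mo_props(3)[OF top fX] and P4 = mo_props(4)[OF top fX]
  have xV: "x \<in> V" and yV: "y \<in> V" using inV exy by auto
  obtain p where "p \<in> ?M (f x) \<inter> ?M (f y)" using adj[OF xV yV] exy by auto
  moreover have "p \<in> X" using calculation P4[OF xV] by auto
  ultimately obtain z where z: "z \<in> V" "f z \<in> ?M (f x) \<inter> ?M (f y)" using XV by auto
  define P where "P w \<longleftrightarrow> w \<in> V \<and> f w \<in> ?M (f x) \<inter> ?M (f y)" for w
  have "P z" using z P_def by auto
  from ex_has_least_nat[of P z "\<lambda>w. card (?M (f w))", OF this]
  obtain w where w: "P w" and wmin: "\<And>w'. P w' \<Longrightarrow> card (?M (f w)) \<le> card (?M (f w'))" by blast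
  have wV: "w \<in> V" using w P_def by auto
  have sub: "?M (f w) \<subseteq> ?M (f x) \<inter> ?M (f y)"
    using w P_def P1[OF xV] P1[OF yV] P3[OF wV] by auto
  have mineq: "?M (f w') = ?M (f w)" if "w' \<in> V" "f w' \<in> ?M (f w)" for w'
  proof -
    have s: "?M (f w') \<subseteq> ?M (f w)" using P3[OF that(1)] P1[OF wV] that by auto
    have "P w'" using that sub P_def by auto
    hence "card (?M (f w)) \<le> card (?M (f w'))" using wmin by auto
    moreover have "finite (?M (f w))" using P4[OF wV] top unfolding finite_topology_def
      by (meson rev_finite_subset)
    ultimately show ?thesis using s by (meson card_seteq)
  qed
  have nb: "f w \<in> ?M (f u)" if ewu: "E w u" for u
  proof -
    have uV: "u \<in> V" using inV ewu by auto
    obtain q where q: "q \<in> ?M (f w) \<inter> ?M (f u)" using adj[OF wV uV] ewu by auto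
    then have "q \<in> X" using P4[OF wV] by auto
    then obtain w' where w': "w' \<in> V" "q = f w'" using XV by auto
    have "?M (f w) = ?M (f w')" using mineq w' q by auto
    also have "\<dots> \<subseteq> ?M (f u)" using P3[OF w'(1)] P1[OF uV] q w' by auto
    finally show ?thesis using P2[OF wV] by auto
  qed
  have simp: "simplicial V E w"
    unfolding simplicial_def clique_def closed_nbhd_def
  proof (intro conjI ballI impI)
    show "w \<in> V" by (rule wV)
    show "insert w {u \<in> V. E w u} \<subseteq> V" using wV by auto
    fix a b assume a: "a \<in> insert w {u \<in> V. E w u}" and b: "b \<in> insert w {u \<in> V. E w u}"
      and ab: "a \<noteq> b"
    show "E a b"
    proof (cases "a = w")
      case True then show ?thesis using b ab by auto
    next
      case aw: False
      show ?thesis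
      proof (cases "b = w")
        case True then show ?thesis using a aw sym by auto
      next
        case False
        then have "E w a" "E w b" using a b aw by auto
        then have "f w \<in> ?M (f a) \<inter> ?M (f b)" using nb by auto
        then show ?thesis using adj[of a b] ab inV \<open>E w a\<close> \<open>E w b\<close> by blast
      qed
    qed
  qed
  have inN: "v \<in> closed_nbhd V E w" if "v \<in> V" "f w \<in> ?M (f v)" for v
  proof (cases "v = w")
    case True then show ?thesis unfolding closed_nbhd_def by auto
  next
    case False
    then have "E w v" using adj[OF wV that(1)] that(2) P2[OF wV] by auto
    then show ?thesis unfolding closed_nbhd_def using that by auto
  qed
  show ?thesis using simp inN[OF xV] inN[OF yV] w P_def by auto
qed

lemma backward:
  assumes G: "simple_graph V E"
    and cov: "\<And>x y. E x y \<Longrightarrow> \<exists>v. simplicial V E v \<and> x \<in> closed_nbhd V E v \<and> y \<in> closed_nbhd V E v"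
  shows "\<exists>T. finite_topology V T \<and> (\<forall>x\<in>V. \<forall>y\<in>V. E x y \<longleftrightarrow> G2_adj T x y)"
proof -
  have sym: "\<And>a b. E a b \<Longrightarrow> E b a" and inV: "\<And>a b. E a b \<Longrightarrow> a \<in> V \<and> b \<in> V"
    and irr: "\<And>a. \<not> E a a" and fin: "finite V"
    using G unfolding simple_graph_def by auto
  define U where "U x = insert x {s \<in> V. simplicial V E s \<and> E x s}" for x
  define T where "T = {A. A \<subseteq> V \<and> (\<forall>x\<in>A. U x \<subseteq> A)}"
  have top: "finite_topology V T" unfolding finite_topology_def
  proof (intro conjI ballI)
    show "finite V" by (rule fin)
    show "T \<subseteq> Pow V" unfolding T_def by blast
    show "{} \<in> T" unfolding T_def by blast
    show "V \<in> T" unfolding T_def U_def by blast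
    fix A B assume "A \<in> T" "B \<in> T"
    then show "A \<union> B \<in> T" "A \<inter> B \<in> T" unfolding T_def by blast+
  qed
  have simpE: "E a b" if "simplicial V E s" "E s a" "E s b" "a \<noteq> b" for s a b
  proof -
    have "a \<in> closed_nbhd V E s" "b \<in> closed_nbhd V E s"
      using that(2,3) inV unfolding closed_nbhd_def by auto
    moreover have "\<forall>x\<in>closed_nbhd V E s. \<forall>y\<in>closed_nbhd V E s. x \<noteq> y \<longrightarrow> E x y"
      using that(1) unfolding simplicial_def clique_def by blast
    ultimately show ?thesis using that(4) by blast
  qed
  have UT: "U x \<in> T" if "x \<in> V" for x
    unfolding T_def
  proof (intro CollectI conjI ballI)
    show "U x \<subseteq> V" using that U_def by auto
    fix y assume y: "y \<in> U x"
    show "U y \<subseteq> U x"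
    proof (cases "y = x")
      case True then show ?thesis by simp
    next
      case False
      then have ys: "simplicial V E y" "E x y" using y U_def by auto
      show ?thesis
      proof
        fix z assume z: "z \<in> U y"
        show "z \<in> U x"
        proof (cases "z = y")
          case True then show ?thesis using y by simp
        next
          case False
          then have zs: "simplicial V E z" "E y z" "z \<in> V" using z U_def by auto
          show ?thesis
          proof (cases "z = x")
            case True then show ?thesis using U_def by auto
          next
            case False
            then have "E x z" using simpE[OF ys(1) sym[OF ys(2)] zs(2)] by auto
            then show ?thesis using zs U_def by auto
          qed
        qed
      qed
    qed
  qed
  have sep: "T2_separated T x y \<longleftrightarrow> U x \<inter> U y = {}" if "x \<in> V" "y \<in> V" for x y
  proof
    assume "T2_separated T x y"
    then obtain A B where AB: "A \<in> T" "B \<in> T" "x \<in> A" "y \<in> B" "A \<inter> B = {}"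
      unfolding T2_separated_def by blast
    have "U x \<subseteq> A" using AB(1,3) unfolding T_def by blast
    moreover have "U y \<subseteq> B" using AB(2,4) unfolding T_def by blast
    ultimately show "U x \<inter> U y = {}" using AB(5) by blast
  next
    assume "U x \<inter> U y = {}"
    then show "T2_separated T x y"
    proof -
      have "x \<in> U x" "y \<in> U y" unfolding U_def by auto
      then show ?thesis unfolding T2_separated_def using UT[OF that(1)] UT[OF that(2)] \<open>U x \<inter> U y = {}\<close> by blast
    qed
  qed
  have "E x y \<longleftrightarrow> G2_adj T x y" if xV: "x \<in> V" and yV: "y \<in> V" for x y
  proof
    assume exy: "E x y"
    then obtain v where v: "simplicial V E v" "x \<in> closed_nbhd V E v" "y \<in> closed_nbhd V E v"
      using cov by blast
    have vV: "v \<in> V" using v unfolding simplicial_def by auto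
    have "U x \<inter> U y \<noteq> {}"
    proof (cases "v = x")
      case True
      then have "x \<in> U y" using sym[OF exy] v(1) True U_def xV by auto
      then show ?thesis using U_def by auto
    next
      case vx: False
      show ?thesis
      proof (cases "v = y")
        case True
        then have "y \<in> U x" using exy v U_def yV by auto
        then show ?thesis using U_def by auto
      next
        case False
        then have "E v x" "E v y" using vx v unfolding closed_nbhd_def by auto
        then have "v \<in> U x \<inter> U y" using v(1) vV sym[OF \<open>E v x\<close>] sym[OF \<open>E v y\<close>] U_def by auto
        then show ?thesis by auto
      qed
    qed
    then show "G2_adj T x y" unfolding G2_adj_def using sep[OF xV yV] exy irr by auto
  next
    assume g: "G2_adj T x y"
    then have xy: "x \<noteq> y" and "U x \<inter> U y \<noteq> {}" unfolding G2_adj_def using sep[OF xV yV] by auto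
    then obtain z where z: "z \<in> U x" "z \<in> U y" by auto
    show "E x y"
    proof (cases "z = x")
      case True then have "E y x" using z xy U_def by auto
      then show ?thesis by (rule sym)
    next
      case zx: False
      show ?thesis
      proof (cases "z = y")
        case True then show ?thesis using z xy U_def by auto
      next
        case False
        then have "simplicial V E z" "E x z" "E y z" using zx z U_def by auto
        then show ?thesis using simpE[of z x y] sym[of x z] sym[of y z] xy by blast
      qed
    qed
  qed
  then show ?thesis using top by blast
qed

lemma transfer:
  assumes top: "finite_topology V T" and inj: "inj_on g V"
  shows "finite_topology (g ` V) ((`) g ` T)"
    and "\<And>x y. x \<in> V \<Longrightarrow> y \<in> V \<Longrightarrow> G2_adj ((`) g ` T) (g x) (g y) \<longleftrightarrow> G2_adj T x y"
proof -
  have TP: "T \<subseteq> Pow V" using top unfolding finite_topology_def by auto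
  have img: "g ` (A \<inter> B) = g ` A \<inter> g ` B" if "A \<in> T" "B \<in> T" for A B
  proof -
    have "A \<subseteq> V" "B \<subseteq> V" using TP that by auto
    then show ?thesis by (rule inj_on_image_Int[OF inj])
  qed
  show "finite_topology (g ` V) ((`) g ` T)"
    unfolding finite_topology_def
  proof (intro conjI ballI)
    show "finite (g ` V)" using top unfolding finite_topology_def by auto
    show "(`) g ` T \<subseteq> Pow (g ` V)" using TP by auto
    show "{} \<in> (`) g ` T" using top unfolding finite_topology_def by force
    show "g ` V \<in> (`) g ` T" using top unfolding finite_topology_def by force
    fix U W assume U: "U \<in> (`) g ` T" and W: "W \<in> (`) g ` T"
    then obtain A B where AB: "A \<in> T" "B \<in> T" "U = g ` A" "W = g ` B" by auto
    have "A \<union> B \<in> T" "A \<inter> B \<in> T" using top AB unfolding finite_topology_def by auto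
    have "g ` (A \<union> B) \<in> (`) g ` T" "g ` (A \<inter> B) \<in> (`) g ` T"
      using \<open>A \<union> B \<in> T\<close> \<open>A \<inter> B \<in> T\<close> by blast+
    then show "U \<union> W \<in> (`) g ` T" "U \<inter> W \<in> (`) g ` T"
      using AB img[OF AB(1,2)] by (simp_all add: image_Un)
  qed
  fix x y assume x: "x \<in> V" and y: "y \<in> V"
  have memb: "g x \<in> g ` A \<longleftrightarrow> x \<in> A" if "A \<in> T" "x \<in> V" for A x
  proof
    assume "g x \<in> g ` A"
    then obtain a where a: "a \<in> A" "g x = g a" by blast
    have "a \<in> V" using a(1) TP that(1) by blast
    then have "x = a" using inj_onD[OF inj a(2) that(2)] by simp
    then show "x \<in> A" using a(1) by simp
  qed simp
  have "T2_separated ((`) g ` T) (g x) (g y) \<longleftrightarrow> T2_separated T x y"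
  proof
    assume "T2_separated ((`) g ` T) (g x) (g y)"
    then obtain A B where AB: "A \<in> T" "B \<in> T" "g x \<in> g ` A" "g y \<in> g ` B" "g ` A \<inter> g ` B = {}"
      unfolding T2_separated_def by blast
    have "x \<in> A" "y \<in> B" using memb[OF AB(1) x] memb[OF AB(2) y] AB(3,4) by simp_all
    moreover have "A \<inter> B = {}" using AB(5) by blast
    ultimately show "T2_separated T x y" unfolding T2_separated_def using AB(1,2) by blast
  next
    assume "T2_separated T x y"
    then obtain A B where AB: "A \<in> T" "B \<in> T" "x \<in> A" "y \<in> B" "A \<inter> B = {}"
      unfolding T2_separated_def by blast
    then have "g ` A \<inter> g ` B = {}" using img[OF AB(1,2)] by simp
    then show "T2_separated ((`) g ` T) (g x) (g y)" unfolding T2_separated_def using AB by blast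
  qed
  moreover have "g x = g y \<longleftrightarrow> x = y" using inj x y by (meson inj_onD)
  ultimately show "G2_adj ((`) g ` T) (g x) (g y) \<longleftrightarrow> G2_adj T x y"
    unfolding G2_adj_def by auto
qed

theorem theorem5p1:
  fixes V :: "'a set" and E :: "'a \<Rightarrow> 'a \<Rightarrow> bool"
  assumes "simple_graph V E"
  shows "in_G2 V E \<longleftrightarrow>
    (\<exists>\<K>. (\<forall>K\<in>\<K>. clique V E K \<and> (\<exists>v\<in>K. simplicial V E v)) \<and>
         (\<forall>x y. E x y \<longrightarrow> (\<exists>K\<in>\<K>. x \<in> K \<and> y \<in> K)))"
proof
  assume "in_G2 V E"
  then obtain X :: "nat set" and T f where "finite_topology X T" "graph_iso V E X (G2_adj T) f"
    unfolding in_G2_def by blast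
  note fw = forward[OF assms this]
  define \<K> where "\<K> = {closed_nbhd V E w | w. simplicial V E w}"
  have "clique V E K \<and> (\<exists>v\<in>K. simplicial V E v)" if KK: "K \<in> \<K>" for K
  proof -
    obtain w where w: "K = closed_nbhd V E w" "simplicial V E w" using KK \<K>_def by blast
    have "w \<in> K" using w(1) unfolding closed_nbhd_def by simp
    then show ?thesis using w unfolding simplicial_def by blast
  qed
  moreover have "\<exists>K\<in>\<K>. x \<in> K \<and> y \<in> K" if exy: "E x y" for x y
  proof -
    obtain w where w: "simplicial V E w" "x \<in> closed_nbhd V E w" "y \<in> closed_nbhd V E w"
      using fw[OF exy] by blast
    have "closed_nbhd V E w \<in> \<K>" using w(1) \<K>_def by blast
    then show ?thesis using w by blast
  qed
  ultimately show "\<exists>\<K>. (\<forall>K\<in>\<K>. clique V E K \<and> (\<exists>v\<in>K. simplicial V E v)) \<and>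
         (\<forall>x y. E x y \<longrightarrow> (\<exists>K\<in>\<K>. x \<in> K \<and> y \<in> K))" by blast
next
  assume "\<exists>\<K>. (\<forall>K\<in>\<K>. clique V E K \<and> (\<exists>v\<in>K. simplicial V E v)) \<and>
         (\<forall>x y. E x y \<longrightarrow> (\<exists>K\<in>\<K>. x \<in> K \<and> y \<in> K))"
  then obtain \<K> where K1: "\<forall>K\<in>\<K>. clique V E K \<and> (\<exists>v\<in>K. simplicial V E v)"
    and K2: "\<forall>x y. E x y \<longrightarrow> (\<exists>K\<in>\<K>. x \<in> K \<and> y \<in> K)" by blast
  have cov: "\<exists>v. simplicial V E v \<and> x \<in> closed_nbhd V E v \<and> y \<in> closed_nbhd V E v"
    if exy: "E x y" for x y
  proof -
    obtain K where K: "K \<in> \<K>" "x \<in> K" "y \<in> K" using K2 exy by blast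
    obtain v where v: "v \<in> K" "simplicial V E v" using K1 K by blast
    have "clique V E K" using K1 K by blast
    then have "K \<subseteq> closed_nbhd V E v" using v unfolding clique_def closed_nbhd_def by auto
    then show ?thesis using v K by blast
  qed
  obtain T where T: "finite_topology V T" "\<forall>x\<in>V. \<forall>y\<in>V. E x y \<longleftrightarrow> G2_adj T x y"
    using backward[OF assms cov] by blast
  have "finite V" using assms unfolding simple_graph_def by auto
  then obtain g where g: "bij_betw g V {0..<card V}" using ex_bij_betw_finite_nat by blast
  then have inj: "inj_on g V" and im: "g ` V = {0..<card V}" by (auto simp: bij_betw_def)
  note tr = transfer[OF T(1) inj]
  have "graph_iso V E (g ` V) (G2_adj ((`) g ` T)) g"
    unfolding graph_iso_def
  proof (intro conjI ballI)
    show "bij_betw g V (g ` V)" using inj by (rule inj_on_imp_bij_betw)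
    fix x y assume "x \<in> V" "y \<in> V"
    then show "E x y \<longleftrightarrow> G2_adj ((`) g ` T) (g x) (g y)" using T(2) tr(2) by simp
  qed
  then show "in_G2 V E" unfolding in_G2_def using tr(1) by blast
qed

end
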